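(* Let $m\ge n\ge1$, let $\boldsymbol{v}=(v_1,\dots,v_n)^T\in\mathbb{C}^n$ be a deterministic unit vector, let $\boldsymbol{H}\in\mathbb{C}^{m\times n}$ be a random partial Fourier/Hadamard matrix whose columns are sampled uniformly without replacement from the columns of the $m\times m$ DFT (resp. Hadamard) matrix, so that $\boldsymbol{H}^*\boldsymbol{H}=m\boldsymbol{I}_n$, and let $\boldsymbol{M}$ be an $n\times n$ diagonal matrix with i.i.d. diagonal entries uniform on $\{\pm1\}$, independent of $\boldsymbol{H}$. Set $\boldsymbol{A}=\boldsymbol{H}\boldsymbol{M}$ and $\boldsymbol{\Lambda}=\operatorname{diag}(\overline{\boldsymbol{A}\boldsymbol{v}})$. If $m\ge2$, then $$\mathbb{E}\big(\boldsymbol{\Lambda}\boldsymbol{A}(\boldsymbol{\Lambda}\boldsymbol{A})^*\big)=\frac{(n-1)(m\boldsymbol{I}_m-\boldsymbol 1_m\boldsymbol 1_m^* )}{m-1}+\boldsymbol 1_m\boldsymbol 1_m^*,$$ and if $m=n=1$, then $\mathbb{E}\big(\boldsymbol{\Lambda}\boldsymbol{A}(\boldsymbol{\Lambda}\boldsymbol{A})^*\big)=1$.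
   Context: The DFT and Hadamard matrices are unnormalized, with all entries of modulus $1$. $\overline{\cdot}$ denotes entrywise complex conjugation and $\boldsymbol 1_m$ the all-ones vector in $\mathbb{R}^m$. *)

theory Defs
  imports Complex_Main "HOL-Library.FuncSet"
begin

text \<open>Matrices of varying size are represented as functions nat => nat => complex,
  only entries with indices in range being meaningful.\<close>

definition dft_mat :: "nat \<Rightarrow> nat \<Rightarrow> nat \<Rightarrow> complex" where
  "dft_mat m j k = cis (- 2 * pi * real j * real k / real m)"

definition is_hadamard :: "nat \<Rightarrow> (nat \<Rightarrow> nat \<Rightarrow> complex) \<Rightarrow> bool" where
  "is_hadamard m F \<longleftrightarrow>
     (\<forall>i<m. \<forall>j<m. F i j = 1 \<or> F i j = -1) \<and>
     (\<forall>i<m. \<forall>j<m. (\<Sum>k<m. F k i * F k j) = (if i = j then of_nat m else 0))"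

text \<open>Ordered column selections: n columns out of m, sampled uniformly without replacement.\<close>
definition col_choices :: "nat \<Rightarrow> nat \<Rightarrow> (nat \<Rightarrow> nat) set" where
  "col_choices m n = {c \<in> {..<n} \<rightarrow>\<^sub>E {..<m}. inj_on c {..<n}}"

text \<open>Sign patterns: diagonal of M, i.i.d. uniform on {1,-1}.\<close>
definition sign_choices :: "nat \<Rightarrow> (nat \<Rightarrow> complex) set" where
  "sign_choices n = {..<n} \<rightarrow>\<^sub>E {1, -1}"

definition uavg :: "'a set \<Rightarrow> ('a \<Rightarrow> complex) \<Rightarrow> complex" where
  "uavg S f = (\<Sum>x\<in>S. f x) / of_nat (card S)"

text \<open>A = H M, where H i k = F i (c k) and M = diag(s).\<close>
definition A_mat :: "(nat \<Rightarrow> nat \<Rightarrow> complex) \<Rightarrow> (nat \<Rightarrow> nat) \<Rightarrow> (nat \<Rightarrow> complex)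
    \<Rightarrow> nat \<Rightarrow> nat \<Rightarrow> complex" where
  "A_mat F c s i k = F i (c k) * s k"

definition LA_mat :: "nat \<Rightarrow> (nat \<Rightarrow> nat \<Rightarrow> complex) \<Rightarrow> (nat \<Rightarrow> nat) \<Rightarrow> (nat \<Rightarrow> complex)
    \<Rightarrow> (nat \<Rightarrow> complex) \<Rightarrow> nat \<Rightarrow> nat \<Rightarrow> complex" where
  "LA_mat n F c s v i k = cnj (\<Sum>l<n. A_mat F c s i l * v l) * A_mat F c s i k"

definition LA_gram :: "nat \<Rightarrow> (nat \<Rightarrow> nat \<Rightarrow> complex) \<Rightarrow> (nat \<Rightarrow> nat) \<Rightarrow> (nat \<Rightarrow> complex)
    \<Rightarrow> (nat \<Rightarrow> complex) \<Rightarrow> nat \<Rightarrow> nat \<Rightarrow> complex" where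
  "LA_gram n F c s v i j = (\<Sum>k<n. LA_mat n F c s v i k * cnj (LA_mat n F c s v j k))"

definition expected_gram :: "nat \<Rightarrow> nat \<Rightarrow> (nat \<Rightarrow> nat \<Rightarrow> complex) \<Rightarrow> (nat \<Rightarrow> complex)
    \<Rightarrow> nat \<Rightarrow> nat \<Rightarrow> complex" where
  "expected_gram m n F v i j =
     uavg (col_choices m n \<times> sign_choices n) (\<lambda>(c, s). LA_gram n F c s v i j)"

end

theory Submission
  imports Defs "HOL-Combinatorics.Transposition" "Jordan_Normal_Form.Determinant"
begin


lemma col_fin: "finite (col_choices m n)"
  unfolding col_choices_def by (rule finite_subset[of _ "{..<n} \<rightarrow>\<^sub>E {..<m}"]) (auto intro: finite_PiE)

lemma col_ne: "n \<le> m \<Longrightarrow> restrict id {..<n} \<in> col_choices m n"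
  unfolding col_choices_def by (auto simp: inj_on_def)

definition Cab where "Cab m n k l a b = {c \<in> col_choices m n. c k = a \<and> c l = b}"

lemma Cab_le:
  assumes "x < m" "y < m" "k < n" "l < n"
  shows "card (Cab m n k l a b) \<le> card (Cab m n k l (transpose x y a) (transpose x y b))"
proof -
  let ?t = "transpose x y"
  let ?f = "\<lambda>c. restrict (?t \<circ> c) {..<n}"
  have "inj_on ?f (Cab m n k l a b)"
  proof (rule inj_onI)
    fix c1 c2 assume c: "c1 \<in> Cab m n k l a b" "c2 \<in> Cab m n k l a b" "?f c1 = ?f c2"
    show "c1 = c2"
    proof (rule extensionalityI[of _ "{..<n}"])
      show "c1 \<in> extensional {..<n}" "c2 \<in> extensional {..<n}"
        using c(1,2) by (auto simp: Cab_def col_choices_def PiE_def)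
      fix z assume "z \<in> {..<n}"
      then have "?t (c1 z) = ?t (c2 z)" using fun_cong[OF c(3), of z] by simp
      then show "c1 z = c2 z" by (metis transpose_involutory)
    qed
  qed
  moreover have "?f ` Cab m n k l a b \<subseteq> Cab m n k l (?t a) (?t b)"
  proof
    fix d assume "d \<in> ?f ` Cab m n k l a b"
    then obtain c where c: "c \<in> Cab m n k l a b" "d = ?f c" by blast
    have inj: "inj_on (?t \<circ> c) {..<n}"
      using c(1) by (auto simp: Cab_def col_choices_def intro!: comp_inj_on inj_on_subset[OF inj_transpose[THEN inj_on_subset]])
    have "?t z < m" if "z < m" for z using that assms by (auto simp: transpose_def)
    then have "d \<in> {..<n} \<rightarrow>\<^sub>E {..<m}" using c by (auto simp: Cab_def col_choices_def PiE_def Pi_def)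
    moreover have "inj_on d {..<n}" using inj c(2) by (simp add: inj_on_def)
    ultimately show "d \<in> Cab m n k l (?t a) (?t b)" using c assms by (auto simp: Cab_def col_choices_def)
  qed
  moreover have "finite (Cab m n k l (?t a) (?t b))" using col_fin[of m n] by (auto simp: Cab_def)
  ultimately show ?thesis by (meson card_inj_on_le)
qed

lemma Cab_eq_t:
  assumes "x < m" "y < m" "k < n" "l < n"
  shows "card (Cab m n k l a b) = card (Cab m n k l (transpose x y a) (transpose x y b))"
  using Cab_le[OF assms, of a b] Cab_le[OF assms, of "transpose x y a" "transpose x y b"] by simp

lemma Cab_const:
  assumes "a < m" "b < m" "a' < m" "b' < m" "a \<noteq> b" "a' \<noteq> b'" "k < n" "l < n"
  shows "card (Cab m n k l a b) = card (Cab m n k l a' b')"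
proof -
  let ?b1 = "transpose a a' b"
  have 1: "card (Cab m n k l a b) = card (Cab m n k l a' ?b1)"
    using Cab_eq_t[of a m a' k n l a b] assms by simp
  have b1: "?b1 < m" using assms by (auto simp: transpose_def)
  have ne: "a' \<noteq> ?b1" using assms by (auto simp: transpose_def)
  have 2: "card (Cab m n k l a' ?b1) = card (Cab m n k l a' b')"
    using Cab_eq_t[of ?b1 m b' k n l a' ?b1] assms b1 ne by simp
  show ?thesis using 1 2 by simp
qed

lemma col_sum_split:
  assumes "k < n" "l < n" "k \<noteq> l"
  shows "(\<Sum>c\<in>col_choices m n. (f (c k) (c l) :: complex)) =
     (\<Sum>a<m. \<Sum>b\<in>{..<m}-{a}. of_nat (card (Cab m n k l a b)) * f a b)"
proof -
  let ?C = "col_choices m n"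
  have "(\<Sum>c\<in>?C. f (c k) (c l)) = (\<Sum>c\<in>?C. \<Sum>a<m. \<Sum>b\<in>{..<m}-{a}. if c k = a \<and> c l = b then f a b else 0)"
  proof (rule sum.cong[OF refl])
    fix c assume c: "c \<in> ?C"
    then have ck: "c k < m" "c l < m" "c k \<noteq> c l" using assms
      by (auto simp: col_choices_def PiE_def Pi_def inj_on_def)
    have "(\<Sum>a<m. \<Sum>b\<in>{..<m}-{a}. if c k = a \<and> c l = b then f a b else 0)
        = (\<Sum>a<m. if a = c k then (\<Sum>b\<in>{..<m}-{a}. if b = c l then f a b else 0) else 0)"
      by (rule sum.cong) auto
    also have "\<dots> = (\<Sum>b\<in>{..<m}-{c k}. if b = c l then f (c k) b else 0)"
      using ck by (simp add: sum.delta')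
    also have "\<dots> = f (c k) (c l)" using ck by (simp add: sum.delta')
    finally show "f (c k) (c l) = (\<Sum>a<m. \<Sum>b\<in>{..<m}-{a}. if c k = a \<and> c l = b then f a b else 0)" by simp
  qed
  also have "\<dots> = (\<Sum>a<m. \<Sum>b\<in>{..<m}-{a}. \<Sum>c\<in>?C. if c k = a \<and> c l = b then f a b else 0)"
    by (simp add: sum.swap[of _ ?C] )
  also have "\<dots> = (\<Sum>a<m. \<Sum>b\<in>{..<m}-{a}. of_nat (card (Cab m n k l a b)) * f a b)"
  proof (intro sum.cong refl)
    fix a b
    have "(\<Sum>c\<in>?C. if c k = a \<and> c l = b then f a b else 0) = (\<Sum>c\<in>Cab m n k l a b. f a b)"
      unfolding Cab_def using col_fin[of m n] by (simp add: sum.inter_filter[symmetric])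
    then show "(\<Sum>c\<in>?C. if c k = a \<and> c l = b then f a b else 0) = of_nat (card (Cab m n k l a b)) * f a b"
      by simp
  qed
  finally show ?thesis .
qed

lemma col_pair:
  assumes "k < n" "l < n" "k \<noteq> l" "n \<le> m"
  shows "(\<Sum>c\<in>col_choices m n. (f (c k) (c l) :: complex)) =
     of_nat (card (col_choices m n)) * (\<Sum>a<m. \<Sum>b\<in>{..<m}-{a}. f a b) / (of_nat m * (of_nat m - 1))"
proof -
  have m2: "m \<ge> 2" using assms by auto
  define N where "N = card (Cab m n k l 0 1)"
  have cN: "card (Cab m n k l a b) = N" if "a < m" "b \<in> {..<m}-{a}" for a b
    unfolding N_def using Cab_const[of a m b 0 1 k n l] that m2 assms by auto
  have S: "(\<Sum>c\<in>col_choices m n. (g (c k) (c l) :: complex)) = of_nat N * (\<Sum>a<m. \<Sum>b\<in>{..<m}-{a}. g a b)" for g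
    unfolding col_sum_split[OF assms(1-3)] sum_distrib_left
    by (intro sum.cong refl) (simp add: cN)
  have "of_nat (card (col_choices m n)) = (\<Sum>c\<in>col_choices m n. (1::complex))" by simp
  also have "\<dots> = of_nat N * (of_nat m * (of_nat m - 1))"
    using S[of "\<lambda>_ _. 1"] m2 by (simp add: of_nat_diff)
  finally have cC: "of_nat (card (col_choices m n)) = (of_nat N * (of_nat m * (of_nat m - 1)) :: complex)" .
  have "(of_nat m * (of_nat m - 1) :: complex) \<noteq> 0" using m2 by simp
  then show ?thesis unfolding S cC by (simp add: field_simps)
qed


lemma sign_fin: "finite (sign_choices n)"
  unfolding sign_choices_def by (auto intro: finite_PiE)

lemma sign_val: "s \<in> sign_choices n \<Longrightarrow> k < n \<Longrightarrow> s k = 1 \<or> s k = -1"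
  unfolding sign_choices_def by auto

lemma sign_cnj: "s \<in> sign_choices n \<Longrightarrow> k < n \<Longrightarrow> cnj (s k) = s k"
  using sign_val by fastforce

lemma sign_sq: "s \<in> sign_choices n \<Longrightarrow> k < n \<Longrightarrow> s k * s k = 1"
  using sign_val by fastforce

lemma sign_sum:
  assumes "l < n" "l' < n"
  shows "(\<Sum>s\<in>sign_choices n. s l * s l') = (if l = l' then of_nat (card (sign_choices n)) else 0)"
proof (cases "l = l'")
  case True
  then show ?thesis using assms by (simp add: sign_sq)
next
  case False
  let ?S = "sign_choices n"
  let ?p = "\<lambda>s. s(l := - s l)"
  have mem: "?p s \<in> ?S" if "s \<in> ?S" for s
    using that assms unfolding sign_choices_def by (auto simp: PiE_def Pi_def extensional_def)
  have "(\<Sum>s\<in>?S. s l * s l') = (\<Sum>s\<in>?S. ?p s l * ?p s l')"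
    by (rule sum.reindex_bij_witness[of _ ?p ?p]) (auto simp: mem)
  also have "\<dots> = - (\<Sum>s\<in>?S. s l * s l')" using False by (simp add: sum_negf)
  finally show ?thesis using False by simp
qed

lemma card_sign_ne: "card (sign_choices n) \<noteq> 0"
proof -
  have "(\<lambda>k\<in>{..<n}. 1) \<in> sign_choices n" unfolding sign_choices_def by auto
  then show ?thesis using sign_fin[of n] by auto
qed

lemma gram_s:
  assumes s: "s \<in> sign_choices n"
  shows "LA_gram n F c s v i j =
    (\<Sum>l<n. \<Sum>l'<n. cnj (F i (c l) * v l) * (F j (c l') * v l') * (s l * s l')) * (\<Sum>k<n. F i (c k) * cnj (F j (c k)))"
proof -
  have X: "cnj (\<Sum>l<n. A_mat F c s i l * v l) * (\<Sum>l<n. A_mat F c s j l * v l) =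
      (\<Sum>l<n. \<Sum>l'<n. cnj (F i (c l) * v l) * (F j (c l') * v l') * (s l * s l'))"
    unfolding cnj_sum sum_product A_mat_def
    by (intro sum.cong refl) (simp add: sign_cnj[OF s] mult_ac)
  have G: "A_mat F c s i k * cnj (A_mat F c s j k) = F i (c k) * cnj (F j (c k))" if "k < n" for k
    using sign_cnj[OF s that] sign_sq[OF s that] unfolding A_mat_def by (simp add: mult_ac)
  have "LA_gram n F c s v i j = (\<Sum>k<n. cnj (\<Sum>l<n. A_mat F c s i l * v l) * (\<Sum>l<n. A_mat F c s j l * v l) * (A_mat F c s i k * cnj (A_mat F c s j k)))"
    unfolding LA_gram_def LA_mat_def by (intro sum.cong refl) (simp add: mult_ac)
  also have "\<dots> = (\<Sum>k<n. cnj (\<Sum>l<n. A_mat F c s i l * v l) * (\<Sum>l<n. A_mat F c s j l * v l) * (F i (c k) * cnj (F j (c k))))"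
    by (intro sum.cong refl) (simp add: G)
  finally show ?thesis by (simp only: sum_distrib_left[symmetric] X)
qed

lemma sum_s:
  "(\<Sum>s\<in>sign_choices n. LA_gram n F c s v i j) = of_nat (card (sign_choices n)) *
    ((\<Sum>l<n. of_real ((cmod (v l))\<^sup>2) * cnj (F i (c l)) * F j (c l)) * (\<Sum>k<n. F i (c k) * cnj (F j (c k))))"
proof -
  let ?S = "sign_choices n"
  have nv: "\<And>l. complex_of_real ((cmod (v l))\<^sup>2) = v l * cnj (v l)" using complex_norm_square by simp
  have "(\<Sum>s\<in>?S. LA_gram n F c s v i j) = (\<Sum>s\<in>?S.
    (\<Sum>l<n. \<Sum>l'<n. cnj (F i (c l) * v l) * (F j (c l') * v l') * (s l * s l')) * (\<Sum>k<n. F i (c k) * cnj (F j (c k))))"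
    by (rule sum.cong) (auto simp: gram_s)
  also have "\<dots> = (\<Sum>l<n. \<Sum>l'<n. cnj (F i (c l) * v l) * (F j (c l') * v l') * (\<Sum>s\<in>?S. s l * s l')) * (\<Sum>k<n. F i (c k) * cnj (F j (c k)))"
    by (simp add: sum_distrib_left sum_distrib_right sum.swap[of _ ?S] mult_ac)
  also have "\<dots> = (\<Sum>l<n. \<Sum>l'<n. if l = l' then cnj (F i (c l) * v l) * (F j (c l') * v l') * of_nat (card ?S) else 0) * (\<Sum>k<n. F i (c k) * cnj (F j (c k)))"
    by (intro arg_cong2[where f="(*)"] sum.cong refl) (simp add: sign_sum)
  also have "\<dots> = of_nat (card ?S) * ((\<Sum>l<n. of_real ((cmod (v l))\<^sup>2) * cnj (F i (c l)) * F j (c l)) * (\<Sum>k<n. F i (c k) * cnj (F j (c k))))"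
    using nv by (simp add: sum_distrib_left mult_ac)
  finally show ?thesis .
qed


lemma main_abs:
  fixes m n :: nat and v :: "nat \<Rightarrow> complex" and F :: "nat \<Rightarrow> nat \<Rightarrow> complex"
  assumes "1 \<le> n" and "n \<le> m"
    and vn: "(\<Sum>k<n. (cmod (v k))\<^sup>2) = 1"
    and P1: "\<And>i a. i < m \<Longrightarrow> a < m \<Longrightarrow> F i a * cnj (F i a) = 1"
    and P2: "\<And>i j. i < m \<Longrightarrow> j < m \<Longrightarrow> (\<Sum>a<m. F i a * cnj (F j a)) = (if i = j then of_nat m else 0)"
    and ij: "i < m" "j < m"
  shows "expected_gram m n F v i j = 1 + of_nat (n - 1) * (if i = j then of_nat m * of_nat m - of_nat m else - of_nat m) / (of_nat m * (of_nat m - 1))"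
proof -
  let ?C = "col_choices m n" and ?S = "sign_choices n"
  define g where "g a = F i a * cnj (F j a)" for a
  define D where "D = (if i = j then of_nat m * of_nat m - of_nat m else - of_nat m :: complex)"
  define K where "K = 1 + of_nat (n - 1) * D / (of_nat m * (of_nat m - 1))"
  have gg: "g a * cnj (g a) = 1" if "a < m" for a
    using P1[OF ij(1) that] P1[OF ij(2) that] unfolding g_def
    by (simp add: mult_ac) (metis complex_cnj_cnj complex_cnj_mult mult.assoc mult.left_commute mult_1_right)
  have Z: "(\<Sum>a<m. g a) = (if i = j then of_nat m else 0)" unfolding g_def using P2 ij by simp
  have Dval: "(\<Sum>a<m. \<Sum>b\<in>{..<m}-{a}. g a * cnj (g b)) = D"
  proof -
    have "(\<Sum>a<m. \<Sum>b\<in>{..<m}-{a}. g a * cnj (g b)) = (\<Sum>a<m. g a * (cnj (\<Sum>b<m. g b)) - 1)"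
      by (intro sum.cong refl) (simp add: sum_distrib_left[symmetric] sum_diff1 cnj_sum right_diff_distrib gg)
    also have "\<dots> = D" unfolding Z D_def by (simp add: sum_subtractf sum_distrib_right[symmetric] Z)
    finally show ?thesis .
  qed
  have fC: "finite ?C" by (rule col_fin)
  have cC: "card ?C \<noteq> 0" using col_ne[OF assms(2)] fC by auto
  have cm: "c l < m" if "c \<in> ?C" "l < n" for c l using that by (auto simp: col_choices_def)
  have T: "(\<Sum>k<n. \<Sum>c\<in>?C. g (c k) * cnj (g (c l))) = of_nat (card ?C) * K" if l: "l < n" for l
  proof -
    have "(\<Sum>k<n. \<Sum>c\<in>?C. g (c k) * cnj (g (c l))) =
        (\<Sum>c\<in>?C. g (c l) * cnj (g (c l))) + (\<Sum>k\<in>{..<n}-{l}. \<Sum>c\<in>?C. g (c k) * cnj (g (c l)))"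
      using l by (simp add: sum_diff1)
    also have "(\<Sum>c\<in>?C. g (c l) * cnj (g (c l))) = of_nat (card ?C)"
      using gg cm l by simp
    also have "(\<Sum>k\<in>{..<n}-{l}. \<Sum>c\<in>?C. g (c k) * cnj (g (c l))) =
       (\<Sum>k\<in>{..<n}-{l}. of_nat (card ?C) * D / (of_nat m * (of_nat m - 1)))"
      by (intro sum.cong refl) (use l assms(2) in \<open>simp add: col_pair[where f="\<lambda>a b. g a * cnj (g b)"] Dval\<close>)
    also have "\<dots> = of_nat (n - 1) * (of_nat (card ?C) * D / (of_nat m * (of_nat m - 1)))"
      using l by simp
    finally show ?thesis unfolding K_def by (simp add: field_simps)
  qed
  have "(\<Sum>c\<in>?C. \<Sum>s\<in>?S. LA_gram n F c s v i j) = (\<Sum>c\<in>?C. of_nat (card ?S) *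
      ((\<Sum>l<n. of_real ((cmod (v l))\<^sup>2) * cnj (g (c l))) * (\<Sum>k<n. g (c k))))"
    unfolding sum_s g_def by (simp add: mult_ac)
  also have "\<dots> = of_nat (card ?S) * (\<Sum>l<n. of_real ((cmod (v l))\<^sup>2) * (\<Sum>k<n. \<Sum>c\<in>?C. g (c k) * cnj (g (c l))))"
    by (simp add: sum_distrib_left sum_distrib_right sum.swap[of _ ?C] mult_ac)
  also have "\<dots> = of_nat (card ?S) * (\<Sum>l<n. of_real ((cmod (v l))\<^sup>2) * (of_nat (card ?C) * K))"
    by (simp add: T)
  also have "\<dots> = of_nat (card ?S) * of_nat (card ?C) * K * of_real (\<Sum>l<n. (cmod (v l))\<^sup>2)"
    by (simp add: sum_distrib_right sum_distrib_left mult_ac)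
  also have "\<dots> = of_nat (card ?S) * of_nat (card ?C) * K" using vn by simp
  finally have tot: "(\<Sum>c\<in>?C. \<Sum>s\<in>?S. LA_gram n F c s v i j) = of_nat (card ?S) * of_nat (card ?C) * K" .
  have "expected_gram m n F v i j = (\<Sum>c\<in>?C. \<Sum>s\<in>?S. LA_gram n F c s v i j) / (of_nat (card ?C) * of_nat (card ?S))"
    unfolding expected_gram_def uavg_def
    by (simp add: sum.cartesian_product[symmetric] card_cartesian_product)
  also have "\<dots> = K" unfolding tot using cC card_sign_ne[of n] by simp
  finally show ?thesis unfolding K_def D_def .
qed

lemma dft_P1: "dft_mat m i a * cnj (dft_mat m i a) = 1"
  unfolding dft_mat_def by (simp add: cis_cnj cis_mult)

lemma dft_P2:
  assumes ij: "i < m" "j < m"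
  shows "(\<Sum>a<m. dft_mat m i a * cnj (dft_mat m j a)) = (if i = j then of_nat m else 0)"
proof -
  define d where "d = int j - int i"
  define w where "w = cis (2 * pi * real_of_int d / real m)"
  have m0: "m > 0" using ij by auto
  have tm: "dft_mat m i a * cnj (dft_mat m j a) = w ^ a" for a
  proof -
    have "dft_mat m i a * cnj (dft_mat m j a) = cis (- 2 * pi * real i * real a / real m + 2 * pi * real j * real a / real m)"
      unfolding dft_mat_def by (simp add: cis_cnj cis_mult)
    also have "- 2 * pi * real i * real a / real m + 2 * pi * real j * real a / real m = real a * (2 * pi * real_of_int d / real m)"
      unfolding d_def using m0 by (simp add: field_simps)
    finally show ?thesis unfolding w_def by (simp add: DeMoivre)
  qed
  show ?thesis
  proof (cases "i = j")
    case True
    then have "w = 1" unfolding w_def d_def by simp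
    then show ?thesis using True by (simp add: dft_P1)
  next
    case False
    have wm: "w ^ m = 1"
    proof -
      have "w ^ m = cis (2 * pi * real_of_int d)" unfolding w_def DeMoivre using m0 by (simp add: field_simps)
      also have "\<dots> = 1" by (rule cis_multiple_2pi) simp
      finally show ?thesis .
    qed
    have w1: "w \<noteq> 1"
    proof
      assume "w = 1"
      then have "cos (2 * pi * real_of_int d / real m) = 1" unfolding w_def
        by (metis cis.sel(1) one_complex.simps(1))
      then obtain k :: int where k: "2 * pi * real_of_int d / real m = real_of_int k * 2 * pi"
        unfolding cos_one_2pi_int by blast
      then have "real_of_int d = real_of_int k * real m" using m0 by (simp add: field_simps)
      then have dk: "d = k * int m" by (metis of_int_eq_iff of_int_mult of_int_of_nat_eq)
      have "d \<noteq> 0" "\<bar>d\<bar> < int m" using False ij unfolding d_def by auto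
      then have k1: "\<bar>k\<bar> \<ge> 1" using dk by auto
      have "\<bar>d\<bar> = \<bar>k\<bar> * int m" using dk by (simp add: abs_mult)
      also have "\<dots> \<ge> int m" using k1 by (simp add: mult_le_cancel_right1)
      finally show False using \<open>\<bar>d\<bar> < int m\<close> by simp
    qed
    have "(\<Sum>a<m. w ^ a) = (w ^ m - 1) / (w - 1)" using w1 by (rule geometric_sum)
    then show ?thesis using False wm by (simp add: tm)
  qed
qed

lemma had_P1: "is_hadamard m F \<Longrightarrow> i < m \<Longrightarrow> a < m \<Longrightarrow> F i a * cnj (F i a) = 1"
  unfolding is_hadamard_def by fastforce

lemma had_cnj: "is_hadamard m F \<Longrightarrow> i < m \<Longrightarrow> a < m \<Longrightarrow> cnj (F i a) = F i a"
  unfolding is_hadamard_def by fastforce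

lemma had_P2:
  assumes H: "is_hadamard m F" and ij: "i < m" "j < m"
  shows "(\<Sum>a<m. F i a * cnj (F j a)) = (if i = j then of_nat m else 0)"
proof -
  define Q where "Q = mat m m (\<lambda>(i,j). F i j)"
  have Qc: "Q \<in> carrier_mat m m" unfolding Q_def by simp
  have m0: "m > 0" using ij by auto
  have QTQ: "transpose_mat Q * Q = of_nat m \<cdot>\<^sub>m 1\<^sub>m m"
  proof (rule eq_matI)
    fix a b assume ab: "a < dim_row (of_nat m \<cdot>\<^sub>m 1\<^sub>m m :: complex mat)" "b < dim_col (of_nat m \<cdot>\<^sub>m 1\<^sub>m m :: complex mat)"
    then have "a < m" "b < m" by auto
    then show "(transpose_mat Q * Q) $$ (a, b) = (of_nat m \<cdot>\<^sub>m 1\<^sub>m m) $$ (a, b)"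
      using H unfolding is_hadamard_def Q_def
      by (auto simp: scalar_prod_def row_def col_def atLeast0LessThan)
  qed (auto simp: Q_def)
  define A where "A = (1 / of_nat m) \<cdot>\<^sub>m transpose_mat Q"
  have Ac: "A \<in> carrier_mat m m" unfolding A_def Q_def by simp
  have "A * Q = (1 / of_nat m) \<cdot>\<^sub>m (transpose_mat Q * Q)"
    unfolding A_def using Qc by (simp add: mult_smult_assoc_mat)
  also have "\<dots> = 1\<^sub>m m" unfolding QTQ using m0 by (intro eq_matI) auto
  finally have "A * Q = 1\<^sub>m m" .
  then have QA: "Q * A = 1\<^sub>m m" using mat_mult_left_right_inverse[OF Ac Qc] by simp
  have "(Q * A) $$ (i, j) = (1 / of_nat m) * (\<Sum>a<m. F i a * F j a)"
    using ij unfolding A_def Q_def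
    by (simp add: scalar_prod_def row_def col_def sum_distrib_left mult_ac atLeast0LessThan)
  then have "(\<Sum>a<m. F i a * F j a) = (if i = j then of_nat m else 0)"
    using QA ij m0 by (auto simp: field_simps split: if_splits)
  then show ?thesis using had_cnj[OF H ij(2)] by simp
qed

theorem lemma5p8:
  fixes m n :: nat and v :: "nat \<Rightarrow> complex" and F :: "nat \<Rightarrow> nat \<Rightarrow> complex"
  assumes "1 \<le> n" and "n \<le> m"
    and "(\<Sum>k<n. (cmod (v k))\<^sup>2) = 1"
    and "F = dft_mat m \<or> is_hadamard m F"
  shows "(2 \<le> m \<longrightarrow> (\<forall>i<m. \<forall>j<m. expected_gram m n F v i j =
            of_nat (n - 1) * (of_nat m * (if i = j then 1 else 0) - 1) / of_nat (m - 1) + 1))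
       \<and> (m = 1 \<and> n = 1 \<longrightarrow> expected_gram m n F v 0 0 = 1)"
proof -
  have P1: "\<And>i a. i < m \<Longrightarrow> a < m \<Longrightarrow> F i a * cnj (F i a) = 1"
    using assms(4) proof
    fix i a assume "F = dft_mat m" then show "F i a * cnj (F i a) = 1" by (simp add: dft_P1)
  next
    fix i a assume "is_hadamard m F" "i < m" "a < m" then show "F i a * cnj (F i a) = 1" by (rule had_P1)
  qed
  have P2: "\<And>i j. i < m \<Longrightarrow> j < m \<Longrightarrow> (\<Sum>a<m. F i a * cnj (F j a)) = (if i = j then of_nat m else 0)"
    using assms(4) proof
    fix i j assume "F = dft_mat m" "i < m" "j < m" then show "(\<Sum>a<m. F i a * cnj (F j a)) = (if i = j then of_nat m else 0)" by (simp add: dft_P2)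
  next
    fix i j assume "is_hadamard m F" "i < m" "j < m" then show "(\<Sum>a<m. F i a * cnj (F j a)) = (if i = j then of_nat m else 0)" by (rule had_P2)
  qed
  have M: "expected_gram m n F v i j = 1 + of_nat (n - 1) * (if i = j then of_nat m * of_nat m - of_nat m else - of_nat m) / (of_nat m * (of_nat m - 1))"
    if "i < m" "j < m" for i j
    by (rule main_abs[OF assms(1,2,3)]) (use P1 P2 that in auto)
  show ?thesis
  proof (intro conjI impI allI)
    fix i j assume m2: "2 \<le> m" and ij: "i < m" "j < m"
    have e: "of_nat (m - 1) = (of_nat m - 1 :: complex)" using m2 by (simp add: of_nat_diff)
    have ne: "(of_nat m - 1 :: complex) \<noteq> 0" "(of_nat m :: complex) \<noteq> 0" using m2 by auto
    show "expected_gram m n F v i j =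
            of_nat (n - 1) * (of_nat m * (if i = j then 1 else 0) - 1) / of_nat (m - 1) + 1"
    proof (cases "i = j")
      case True
      then show ?thesis unfolding M[OF ij] e using ne by (simp add: divide_simps) (simp add: algebra_simps)
    next
      case False
      then show ?thesis unfolding M[OF ij] e using ne by (simp add: divide_simps)
    qed
  next
    assume "m = 1 \<and> n = 1"
    then show "expected_gram m n F v 0 0 = 1" using M[of 0 0] by simp
  qed
qed

end
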